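(* Let $\delta>0$ be the rounding precision and let the representable numbers be the integer multiples of $\delta$. For $x\in\mathbb{R}$ let $\lfloor x\rfloor$ denote the greatest representable number $\le x$, and let stochastic rounding be the random variable $$\mathrm{fl}(x)=\begin{cases}\lfloor x\rfloor & \text{with probability } 1-\frac{x-\lfloor x\rfloor}{\delta},\\ \lfloor x\rfloor+\delta & \text{with probability } \frac{x-\lfloor x\rfloor}{\delta},\end{cases}$$ with all rounding operations performed independently. Then for real numbers $x_1,\dots,x_{N_s}$ and $\mathrm{op}\in\{+,-\}$, $$\mathrm{fl}(\mathrm{fl}(\cdots \mathrm{fl}(\mathrm{fl}(x_1)\,\mathrm{op}\,x_2)\,\mathrm{op}\,\cdots)\,\mathrm{op}\,x_{N_s})=\mathrm{fl}(x_1)\,\mathrm{op}\,\mathrm{fl}(x_2)\,\mathrm{op}\,\cdots\,\mathrm{op}\,\mathrm{fl}(x_{N_s}),$$ where the equality is understood as equality of the probability distributions of the two random variables.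
   Context: Stochastic rounding (SR) with rounding precision $\delta$ as defined in the claim. *)

theory Defs
  imports "HOL-Probability.Probability_Mass_Function"
begin

definition rd_down :: "real \<Rightarrow> real \<Rightarrow> real" where
  "rd_down d x = d * of_int \<lfloor>x / d\<rfloor>"

definition sr :: "real \<Rightarrow> real \<Rightarrow> real pmf" where
  "sr d x = map_pmf (\<lambda>b. if b then rd_down d x + d else rd_down d x)
                     (bernoulli_pmf ((x - rd_down d x) / d))"

definition sr_chain :: "real \<Rightarrow> (real \<Rightarrow> real \<Rightarrow> real) \<Rightarrow> real \<Rightarrow> real list \<Rightarrow> real pmf" where
  "sr_chain d op x1 xs = foldl (\<lambda>p x. bind_pmf p (\<lambda>v. sr d (op v x))) (sr d x1) xs"

definition sr_indep :: "real \<Rightarrow> (real \<Rightarrow> real \<Rightarrow> real) \<Rightarrow> real \<Rightarrow> real list \<Rightarrow> real pmf" where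
  "sr_indep d op x1 xs =
     foldl (\<lambda>p x. bind_pmf p (\<lambda>v. map_pmf (\<lambda>w. op v w) (sr d x))) (sr d x1) xs"

end

theory Submission
  imports Defs
begin

definition repr :: "real \<Rightarrow> real set" where
  "repr d = {d * of_int k | k. True}"

lemma bern_not:
  assumes "0 \<le> p" "p \<le> 1"
  shows "map_pmf Not (bernoulli_pmf p) = bernoulli_pmf (1 - p)"
proof (rule pmf_eqI)
  fix b
  have "pmf (map_pmf Not (bernoulli_pmf p)) b = pmf (bernoulli_pmf p) (\<not> b)"
    using pmf_map_inj'[of Not "bernoulli_pmf p" "\<not> b"] by (simp add: inj_def)
  then show "pmf (map_pmf Not (bernoulli_pmf p)) b = pmf (bernoulli_pmf (1 - p)) b"
    using assms by (cases b) auto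
qed

lemma bern0: "bernoulli_pmf 0 = return_pmf False"
proof (rule pmf_eqI)
  fix i show "pmf (bernoulli_pmf 0) i = pmf (return_pmf False) i" by (cases i) auto
qed

lemma frac_bounds:
  assumes "d > 0"
  shows "0 \<le> (x - rd_down d x) / d" "(x - rd_down d x) / d \<le> 1"
proof -
  have "x - rd_down d x = d * (x/d - of_int \<lfloor>x/d\<rfloor>)" using assms
    by (simp add: rd_down_def algebra_simps)
  then have e: "(x - rd_down d x) / d = x/d - of_int \<lfloor>x/d\<rfloor>" using assms by simp
  show "0 \<le> (x - rd_down d x) / d" unfolding e by linarith
  show "(x - rd_down d x) / d \<le> 1" unfolding e by linarith
qed

lemma sr_repr:
  "set_pmf (sr d x) \<subseteq> repr d"
proof -
  have "rd_down d x \<in> repr d" unfolding repr_def rd_down_def by blast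
  moreover have "rd_down d x + d \<in> repr d" unfolding repr_def rd_down_def
    by (rule CollectI, rule exI[of _ "\<lfloor>x/d\<rfloor> + 1"]) (simp add: algebra_simps)
  ultimately show ?thesis unfolding sr_def by auto
qed

lemma sr_plus:
  assumes "d > 0"
  shows "sr d (d * of_int k + x) = map_pmf ((+) (d * of_int k)) (sr d x)"
proof -
  have "(d * of_int k + x) / d = of_int k + x / d" using assms by (simp add: field_simps)
  then have fl: "\<lfloor>(d * of_int k + x) / d\<rfloor> = k + \<lfloor>x/d\<rfloor>" by simp
  have r: "rd_down d (d * of_int k + x) = d * of_int k + rd_down d x"
    unfolding rd_down_def fl by (simp add: algebra_simps)
  show ?thesis unfolding sr_def r map_pmf_comp
    by (rule map_pmf_cong) (auto simp: algebra_simps)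
qed

lemma sr_minus:
  assumes "d > 0"
  shows "sr d (d * of_int k - x) = map_pmf ((-) (d * of_int k)) (sr d x)"
proof (cases "x / d = of_int \<lfloor>x/d\<rfloor>")
  case True
  have r0: "rd_down d x = x" using True assms unfolding rd_down_def
    by (metis nonzero_mult_div_cancel_left order_less_irrefl times_divide_eq_right)
  have "(d * of_int k - x) / d = of_int (k - \<lfloor>x/d\<rfloor>)" using assms True
    by (simp add: field_simps)
  then have r1: "rd_down d (d * of_int k - x) = d * of_int k - x"
    unfolding rd_down_def using assms
    by (metis floor_of_int nonzero_mult_div_cancel_left order_less_irrefl times_divide_eq_right)
  show ?thesis unfolding sr_def r0 r1 by (simp add: bern0)
next
  case False
  have "(d * of_int k - x) / d = of_int k - x / d" using assms by (simp add: field_simps)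
  moreover have "\<lfloor>of_int k - x / d\<rfloor> = k - \<lfloor>x/d\<rfloor> - 1"
    using False by (simp add: floor_eq_iff) linarith?
  ultimately have fl: "\<lfloor>(d * of_int k - x) / d\<rfloor> = k - \<lfloor>x/d\<rfloor> - 1" by simp
  have r: "rd_down d (d * of_int k - x) = d * of_int k - rd_down d x - d"
    unfolding rd_down_def fl by (simp add: algebra_simps)
  have p: "(d * of_int k - x - (d * of_int k - rd_down d x - d)) / d = 1 - (x - rd_down d x) / d"
    using assms by (simp add: field_simps)
  have "sr d (d * of_int k - x) = map_pmf (\<lambda>b. if b then d * of_int k - rd_down d x - d + d
      else d * of_int k - rd_down d x - d) (bernoulli_pmf (1 - (x - rd_down d x) / d))"
    unfolding sr_def r p ..
  also have "\<dots> = map_pmf (\<lambda>b. if b then d * of_int k - rd_down d x - d + d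
      else d * of_int k - rd_down d x - d) (map_pmf Not (bernoulli_pmf ((x - rd_down d x) / d)))"
    by (simp only: bern_not[OF frac_bounds[OF assms]])
  also have "\<dots> = map_pmf ((-) (d * of_int k)) (sr d x)"
    unfolding sr_def map_pmf_comp by (rule map_pmf_cong) auto
  finally show ?thesis .
qed

lemma step:
  assumes "d > 0" "op = (+) \<or> op = (-)" "set_pmf p \<subseteq> repr d"
  shows "bind_pmf p (\<lambda>v. sr d (op v x)) = bind_pmf p (\<lambda>v. map_pmf (\<lambda>w. op v w) (sr d x))"
proof (rule bind_pmf_cong[OF refl])
  fix v assume "v \<in> set_pmf p"
  then obtain k where v: "v = d * of_int k" using assms(3) unfolding repr_def by blast
  show "sr d (op v x) = map_pmf (op v) (sr d x)"
    using assms(2) sr_plus[OF assms(1)] sr_minus[OF assms(1)] unfolding v by auto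
qed

lemma main:
  assumes "d > 0" "op = (+) \<or> op = (-)" "set_pmf p \<subseteq> repr d"
  shows "foldl (\<lambda>p x. bind_pmf p (\<lambda>v. sr d (op v x))) p xs =
         foldl (\<lambda>p x. bind_pmf p (\<lambda>v. map_pmf (\<lambda>w. op v w) (sr d x))) p xs"
  using assms(3)
proof (induction xs arbitrary: p)
  case Nil
  then show ?case by simp
next
  case (Cons x xs)
  have s: "set_pmf (bind_pmf p (\<lambda>v. sr d (op v x))) \<subseteq> repr d"
    using sr_repr by auto
  show ?case
    using Cons.IH[OF s] step[OF assms(1,2) Cons.prems, of x] by simp
qed

theorem proposition3p5:
  fixes d x1 :: real and xs :: "real list" and op :: "real \<Rightarrow> real \<Rightarrow> real"
  assumes "d > 0"
    and "op = (+) \<or> op = (-)"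
  shows "sr_chain d op x1 xs = sr_indep d op x1 xs"
  unfolding sr_chain_def sr_indep_def
  by (rule main[OF assms sr_repr])

end
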